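(* Let $X$ be a locally compact Hausdorff space and $\sigma:X\to X$ a homeomorphism. Let $S\subset\{1,2,3,\dots\}$ be a non-empty (finite or infinite) set and $P_S=\{p\in\{1,2,3,\dots\}: p\text{ divides some }s\in S\}$. Then $$\bigcup_{p\in P_S}\mathrm{Per}_p(\sigma)^\circ\subset\bigcup_{s\in S}\mathrm{Fix}_s(\sigma)^\circ\subset\Big(\bigcup_{s\in S}\mathrm{Fix}_s(\sigma)\Big)^\circ\subset\overline{\bigcup_{p\in P_S}\mathrm{Per}_p(\sigma)^\circ},$$ $$\bigcup_{p\in P_S}\mathrm{Per}_p(\sigma)^\circ\subset\Big(\bigcup_{p\in P_S}\mathrm{Per}_p(\sigma)\Big)^\circ\subset\Big(\bigcup_{s\in S}\mathrm{Fix}_s(\sigma)\Big)^\circ,$$ and $$\overline{\Big(\bigcup_{p\in P_S}\mathrm{Per}_p(\sigma)\Big)^\circ}=\overline{\bigcup_{p\in P_S}\mathrm{Per}_p(\sigma)^\circ}=\overline{\bigcup_{s\in S}\mathrm{Fix}_s(\sigma)^\circ}=\overline{\Big(\bigcup_{s\in S}\mathrm{Fix}_s(\sigma)\Big)^\circ}.$$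
   Context: For $n\ge1$, $\mathrm{Fix}_n(\sigma)=\{x\in X:\sigma^nx=x\}$ and $\mathrm{Per}_p(\sigma)$ is the set of points of least period exactly $p$. A superscript $\circ$ denotes interior in $X$ and an overline denotes closure in $X$. *)

theory Defs
  imports "HOL-Analysis.Analysis"
begin

definition Fix :: "'a topology \<Rightarrow> ('a \<Rightarrow> 'a) \<Rightarrow> nat \<Rightarrow> 'a set" where
  "Fix X \<sigma> n = {x \<in> topspace X. (\<sigma> ^^ n) x = x}"

definition Per :: "'a topology \<Rightarrow> ('a \<Rightarrow> 'a) \<Rightarrow> nat \<Rightarrow> 'a set" where
  "Per X \<sigma> p = {x \<in> topspace X. 0 < p \<and> (\<sigma> ^^ p) x = x \<and> (\<forall>k. 0 < k \<and> k < p \<longrightarrow> (\<sigma> ^^ k) x \<noteq> x)}"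

definition divisor_set :: "nat set \<Rightarrow> nat set" where
  "divisor_set S = {p. 0 < p \<and> (\<exists>s\<in>S. p dvd s)}"

end

theory Submission
  imports Defs
begin

lemma cont_iter:
  assumes "continuous_map X X f"
  shows "continuous_map X X (f ^^ n)"
proof (induction n)
  case (Suc n)
  show ?case using continuous_map_compose[OF Suc.IH assms] by (simp add: comp_def)
qed simp

lemma Fix_closed:
  assumes "Hausdorff_space X" "continuous_map X X f"
  shows "closedin X (Fix X f n)"
  unfolding Fix_def
  by (rule closedin_continuous_maps_eq[OF assms(1) cont_iter[OF assms(2)]]) simp

lemma funpow_fix_mult:
  assumes "(f ^^ p) y = y"
  shows "(f ^^ (p * n)) y = y"
  using assms by (induction n) (auto simp: funpow_add)

lemma Per_dvd:
  assumes "y \<in> Per X f p" "(f ^^ s) y = y"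
  shows "p dvd s"
proof -
  from assms(1) have p: "0 < p" "(f ^^ p) y = y"
    "\<And>k. 0 < k \<Longrightarrow> k < p \<Longrightarrow> (f ^^ k) y \<noteq> y" by (auto simp: Per_def)
  have "s = s mod p + p * (s div p)" by simp
  then have "(f ^^ s) y = (f ^^ (s mod p)) ((f ^^ (p * (s div p))) y)"
    by (metis comp_apply funpow_add)
  then have "(f ^^ (s mod p)) y = y" using assms(2) funpow_fix_mult[OF p(2)] by simp
  moreover have "s mod p < p" using p by simp
  ultimately have "s mod p = 0" using p(3) by blast
  then show ?thesis by auto
qed

lemma Per_sub_Fix:
  assumes "p dvd s"
  shows "Per X f p \<subseteq> Fix X f s"
proof
  fix y assume y: "y \<in> Per X f p"
  then have "(f ^^ p) y = y" "y \<in> topspace X" by (auto simp: Per_def)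
  moreover obtain n where "s = p * n" using assms by blast
  ultimately show "y \<in> Fix X f s" using funpow_fix_mult by (auto simp: Fix_def)
qed

lemma least_period:
  assumes "y \<in> topspace X" "0 < s" "(f ^^ s) y = y"
  obtains r where "y \<in> Per X f r" "r \<le> s"
proof -
  define r where "r = (LEAST k. 0 < k \<and> (f ^^ k) y = y)"
  have r: "0 < r \<and> (f ^^ r) y = y" unfolding r_def
    by (rule LeastI[of _ s]) (use assms in auto)
  have "r \<le> s" unfolding r_def by (rule Least_le) (use assms in auto)
  moreover have "\<And>k. 0 < k \<Longrightarrow> k < r \<Longrightarrow> (f ^^ k) y \<noteq> y"
    using not_less_Least r_def by blast
  ultimately show ?thesis using that r assms(1) by (auto simp: Per_def)
qed

lemma finite_step:
  assumes H: "Hausdorff_space X" and c: "continuous_map X X f"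
    and V: "openin X V" "V \<noteq> {}" "V \<subseteq> Fix X f s" and s: "0 < s"
  shows "\<exists>p. 0 < p \<and> p dvd s \<and> V \<inter> (X interior_of Per X f p) \<noteq> {}"
proof -
  define D where "D = {p. p \<le> s \<and> V \<inter> Per X f p \<noteq> {}}"
  obtain y where y: "y \<in> V" using V by blast
  then have yt: "y \<in> topspace X" "(f ^^ s) y = y" using V by (auto simp: Fix_def)
  obtain r where "y \<in> Per X f r" "r \<le> s" using least_period[OF yt(1) s yt(2)] by blast
  then have "r \<in> D" using y unfolding D_def by blast
  have fD: "finite D" unfolding D_def by auto
  define p where "p = Max D"
  have pD: "p \<in> D" unfolding p_def using fD \<open>r \<in> D\<close> Max_in by blast
  have pmax: "\<And>q. q \<in> D \<Longrightarrow> q \<le> p" unfolding p_def using fD by simp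
  then obtain z where z: "z \<in> V" "z \<in> Per X f p" using pD unfolding D_def by blast
  then have p0: "0 < p" by (simp add: Per_def)
  have pdvd: "p dvd s" using Per_dvd[OF z(2)] z(1) V(3) by (auto simp: Fix_def)
  define V' where "V' = V - (\<Union>q\<in>{0<..<p}. Fix X f q)"
  have "openin X V'" unfolding V'_def
    by (intro openin_diff V(1) closedin_Union) (auto intro: Fix_closed[OF H c])
  moreover have "V' \<subseteq> Per X f p"
  proof
    fix w assume w: "w \<in> V'"
    then have wV: "w \<in> V" and nf: "\<And>q. 0 < q \<Longrightarrow> q < p \<Longrightarrow> w \<notin> Fix X f q"
      unfolding V'_def by auto
    have wt: "w \<in> topspace X" "(f ^^ s) w = w" using wV V by (auto simp: Fix_def)
    obtain r' where r': "w \<in> Per X f r'" "r' \<le> s" using least_period[OF wt(1) s wt(2)] by blast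
    then have "r' \<in> D" using wV unfolding D_def by blast
    then have "r' \<le> p" by (rule pmax)
    moreover have "\<not> r' < p"
      using nf[of r'] r'(1) by (auto simp: Per_def Fix_def)
    ultimately show "w \<in> Per X f p" using r' by (metis le_neq_implies_less)
  qed
  ultimately have "V' \<subseteq> X interior_of Per X f p" by (simp add: interior_of_maximal)
  moreover have "z \<in> V'" using z unfolding V'_def by (auto simp: Per_def Fix_def)
  ultimately show ?thesis using p0 pdvd V'_def by blast
qed

theorem propositionA1:
  fixes X :: "'a topology" and \<sigma> :: "'a \<Rightarrow> 'a" and S :: "nat set"
  assumes "Hausdorff_space X" and "locally_compact_space X"
    and "homeomorphic_map X X \<sigma>"
    and "S \<noteq> {}" and "S \<subseteq> {1..}"
  defines "P \<equiv> divisor_set S"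
  shows "(\<Union>p\<in>P. X interior_of Per X \<sigma> p) \<subseteq> (\<Union>s\<in>S. X interior_of Fix X \<sigma> s)
       \<and> (\<Union>s\<in>S. X interior_of Fix X \<sigma> s) \<subseteq> X interior_of (\<Union>s\<in>S. Fix X \<sigma> s)
       \<and> X interior_of (\<Union>s\<in>S. Fix X \<sigma> s) \<subseteq> X closure_of (\<Union>p\<in>P. X interior_of Per X \<sigma> p)
       \<and> (\<Union>p\<in>P. X interior_of Per X \<sigma> p) \<subseteq> X interior_of (\<Union>p\<in>P. Per X \<sigma> p)
       \<and> X interior_of (\<Union>p\<in>P. Per X \<sigma> p) \<subseteq> X interior_of (\<Union>s\<in>S. Fix X \<sigma> s)
       \<and> X closure_of (X interior_of (\<Union>p\<in>P. Per X \<sigma> p)) = X closure_of (\<Union>p\<in>P. X interior_of Per X \<sigma> p)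
       \<and> X closure_of (\<Union>p\<in>P. X interior_of Per X \<sigma> p) = X closure_of (\<Union>s\<in>S. X interior_of Fix X \<sigma> s)
       \<and> X closure_of (\<Union>s\<in>S. X interior_of Fix X \<sigma> s) = X closure_of (X interior_of (\<Union>s\<in>S. Fix X \<sigma> s))"
proof -
  have c: "continuous_map X X \<sigma>" using assms(3) homeomorphic_imp_continuous_map by blast
  define A where "A = (\<Union>p\<in>P. X interior_of Per X \<sigma> p)"
  define B where "B = (\<Union>s\<in>S. X interior_of Fix X \<sigma> s)"
  define C where "C = X interior_of (\<Union>s\<in>S. Fix X \<sigma> s)"
  define D where "D = X interior_of (\<Union>p\<in>P. Per X \<sigma> p)"
  have PS: "\<And>p. p \<in> P \<Longrightarrow> \<exists>s\<in>S. p dvd s" unfolding P_def divisor_set_def by auto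
  have AB: "A \<subseteq> B"
  proof
    fix x assume "x \<in> A"
    then obtain p where p: "p \<in> P" "x \<in> X interior_of Per X \<sigma> p" unfolding A_def by blast
    then obtain s where "s \<in> S" "p dvd s" using PS by blast
    then have "X interior_of Per X \<sigma> p \<subseteq> X interior_of Fix X \<sigma> s"
      by (simp add: interior_of_mono Per_sub_Fix)
    then show "x \<in> B" unfolding B_def using p \<open>s \<in> S\<close> by blast
  qed
  have BC: "B \<subseteq> C" unfolding B_def C_def
    by (intro UN_least interior_of_mono) auto
  have AD: "A \<subseteq> D" unfolding A_def D_def
    by (intro UN_least interior_of_mono) auto
  have PF: "(\<Union>p\<in>P. Per X \<sigma> p) \<subseteq> (\<Union>s\<in>S. Fix X \<sigma> s)"
  proof
    fix x assume "x \<in> (\<Union>p\<in>P. Per X \<sigma> p)"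
    then obtain p where p: "p \<in> P" "x \<in> Per X \<sigma> p" by blast
    then obtain s where "s \<in> S" "p dvd s" using PS by blast
    then show "x \<in> (\<Union>s\<in>S. Fix X \<sigma> s)" using p Per_sub_Fix[of p s X \<sigma>] by blast
  qed
  have DC: "D \<subseteq> C" unfolding D_def C_def using PF by (rule interior_of_mono)
  have CA: "C \<subseteq> X closure_of A"
  proof
    fix x assume xC: "x \<in> C"
    have xt: "x \<in> topspace X" using xC unfolding C_def by (rule subsetD[OF interior_of_subset_topspace])
    show "x \<in> X closure_of A"
      unfolding in_closure_of
    proof (intro conjI xt allI impI)
      fix W assume "x \<in> W \<and> openin X W"
      then have W: "openin X W" "x \<in> W" by auto
      define W' where "W' = W \<inter> C"
      have W'o: "openin X W'" unfolding W'_def C_def by (rule openin_Int[OF W(1) openin_interior_of])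
      have W'ne: "W' \<noteq> {}" using W xC unfolding W'_def by blast
      have W'sub: "W' \<subseteq> (\<Union>s\<in>S. Fix X \<sigma> s)" unfolding W'_def C_def
        using interior_of_subset[of X "\<Union>s\<in>S. Fix X \<sigma> s"] by blast
      define Y where "Y = subtopology X W'"
      have tY: "topspace Y = W'" unfolding Y_def topspace_subtopology using openin_subset[OF W'o] by blast
      have lcY: "locally_compact_space Y" unfolding Y_def
        by (rule locally_compact_space_open_subset) (use assms(1,2) W'o in auto)
      have HY: "Hausdorff_space Y" unfolding Y_def by (rule Hausdorff_space_subtopology[OF assms(1)])
      have rY: "regular_space Y" by (rule locally_compact_Hausdorff_imp_regular_space[OF lcY HY])
      have clo: "\<And>s. closedin Y (W' \<inter> Fix X \<sigma> s)"
      proof -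
        fix s
        have "closedin X (Fix X \<sigma> s)" by (rule Fix_closed[OF assms(1) c])
        then have "closedin Y (W' \<inter> Fix X \<sigma> s)" unfolding Y_def
          by (rule closedin_subtopology_Int_closed)
        then show "closedin Y (W' \<inter> Fix X \<sigma> s)" .
      qed
      have "\<exists>s\<in>S. Y interior_of (W' \<inter> Fix X \<sigma> s) \<noteq> {}"
      proof (rule ccontr)
        assume nn: "\<not> ?thesis"
        have "Y interior_of \<Union>((\<lambda>s. W' \<inter> Fix X \<sigma> s) ` S) = {}"
        proof (rule Baire_category_aux[OF lcY rY])
          show "countable ((\<lambda>s. W' \<inter> Fix X \<sigma> s) ` S)" by simp
          fix G assume "G \<in> (\<lambda>s. W' \<inter> Fix X \<sigma> s) ` S"
          then obtain s where "s \<in> S" "G = W' \<inter> Fix X \<sigma> s" by blast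
          then show "closedin Y G \<and> Y interior_of G = {}" using clo nn by blast
        qed
        moreover have "\<Union>((\<lambda>s. W' \<inter> Fix X \<sigma> s) ` S) = topspace Y" using tY W'sub by blast
        ultimately have "Y interior_of topspace Y = {}" by simp
        then show False using tY W'ne by (metis interior_of_topspace)
      qed
      then obtain s where s: "s \<in> S" and ne: "Y interior_of (W' \<inter> Fix X \<sigma> s) \<noteq> {}" by blast
      define V where "V = Y interior_of (W' \<inter> Fix X \<sigma> s)"
      have "openin Y V" unfolding V_def by simp
      then have Vo: "openin X V" unfolding Y_def by (rule openin_trans_full[OF _ W'o])
      have Vs: "V \<subseteq> W' \<inter> Fix X \<sigma> s" unfolding V_def by (rule interior_of_subset)
      have s0: "0 < s" using s assms(5) by auto
      have Vne: "V \<noteq> {}" using ne V_def by simp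
      have VF: "V \<subseteq> Fix X \<sigma> s" using Vs by blast
      obtain p where p: "0 < p" "p dvd s" "V \<inter> X interior_of Per X \<sigma> p \<noteq> {}"
        using finite_step[OF assms(1) c Vo Vne VF s0] by blast
      have "p \<in> P" unfolding P_def divisor_set_def using p s by auto
      then have PA: "X interior_of Per X \<sigma> p \<subseteq> A" unfolding A_def by blast
      have VW: "V \<subseteq> W" using Vs W'_def by blast
      obtain y where "y \<in> V" "y \<in> X interior_of Per X \<sigma> p" using p(3) by blast
      then show "\<exists>y. y \<in> A \<and> y \<in> W" using PA VW by blast
    qed
  qed
  have cl: "X closure_of C \<subseteq> X closure_of A"
    by (rule closure_of_minimal[OF CA closedin_closure_of])
  have m1: "X closure_of A \<subseteq> X closure_of D" by (rule closure_of_mono[OF AD])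
  have m2: "X closure_of D \<subseteq> X closure_of C" by (rule closure_of_mono[OF DC])
  have m3: "X closure_of A \<subseteq> X closure_of B" by (rule closure_of_mono[OF AB])
  have m4: "X closure_of B \<subseteq> X closure_of C" by (rule closure_of_mono[OF BC])
  have e1: "X closure_of D = X closure_of A" using m1 m2 cl by blast
  have e2: "X closure_of A = X closure_of B" using m3 m4 cl by blast
  have e3: "X closure_of B = X closure_of C" using m3 m4 cl by blast
  show ?thesis
    unfolding A_def[symmetric] B_def[symmetric] C_def[symmetric] D_def[symmetric]
    using AB BC CA AD DC e1 e2 e3 by (intro conjI)
qed

end
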